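(* The price of anarchy (supremum over all weights $w_1,w_2\ge0$ with $w_1+w_2>0$ and all instances, with respect to subgame-perfect equilibria) for sequential two-player weighted congestion games with affine costs and uniform cost functions is equal to $2$.
   Context: A weighted two-player congestion game with affine costs consists of a finite set $R$ of resources, coefficients $\alpha_r,\beta_r \geq 0$ for each $r\in R$, two players $i=1,2$ with weights $w_i\ge 0$, and for each player $i$ a nonempty finite set $\mathcal{A}_i \subseteq 2^R$ of actions. For an action profile $A=(A_1,A_2)$ the load of $r$ is $x_r(A)=\sum_{j:\, r\in A_j} w_j$. With uniform costs, player $i$ pays $C_i(A)=\sum_{r\in A_i}(\alpha_r+\beta_r x_r(A))$. The social cost is $C(A)=C_1(A)+C_2(A)$. In the sequential game, player 1 chooses $A_1$ first, then player 2, knowing $A_1$, chooses $A_2$. A subgame-perfect equilibrium consists of a function $A_1\mapsto A_2^*(A_1)$ with $C_2(A_1,A_2^*(A_1))\le C_2(A_1,A_2)$ for all $A_1,A_2$, and an action $A_1^*$ with $C_1(A_1^*,A_2^*(A_1^* ))\le C_1(A_1,A_2^*(A_1))$ for all $A_1$; its outcome is $(A_1^*,A_2^*(A_1^* ))$. The price of anarchy of an instance is the maximum over subgame-perfect equilibrium outcomes $A$ of $C(A)/\min_{A'}C(A')$; the price of anarchy of a class is the supremum over all instances (with positive optimal social cost). *)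

theory Defs
  imports "HOL-Library.Extended_Real"
begin

text \<open>A weighted two-player congestion game with affine, uniform costs.
  Resources are natural numbers (any finite resource set can be relabelled).\<close>

record game =
  res   :: "nat set"
  alpha :: "nat \<Rightarrow> real"
  beta  :: "nat \<Rightarrow> real"
  wt1   :: real
  wt2   :: real
  acts1 :: "nat set set"
  acts2 :: "nat set set"

definition valid_game :: "game \<Rightarrow> bool" where
  "valid_game G \<longleftrightarrow>
     finite (res G) \<and>
     (\<forall>r\<in>res G. alpha G r \<ge> 0 \<and> beta G r \<ge> 0) \<and>
     wt1 G \<ge> 0 \<and> wt2 G \<ge> 0 \<and> wt1 G + wt2 G > 0 \<and>
     finite (acts1 G) \<and> acts1 G \<noteq> {} \<and> (\<forall>A\<in>acts1 G. A \<subseteq> res G) \<and>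
     finite (acts2 G) \<and> acts2 G \<noteq> {} \<and> (\<forall>A\<in>acts2 G. A \<subseteq> res G)"

definition load :: "game \<Rightarrow> nat set \<Rightarrow> nat set \<Rightarrow> nat \<Rightarrow> real" where
  "load G A1 A2 r = (if r \<in> A1 then wt1 G else 0) + (if r \<in> A2 then wt2 G else 0)"

definition cost1 :: "game \<Rightarrow> nat set \<Rightarrow> nat set \<Rightarrow> real" where
  "cost1 G A1 A2 = (\<Sum>r\<in>A1. alpha G r + beta G r * load G A1 A2 r)"

definition cost2 :: "game \<Rightarrow> nat set \<Rightarrow> nat set \<Rightarrow> real" where
  "cost2 G A1 A2 = (\<Sum>r\<in>A2. alpha G r + beta G r * load G A1 A2 r)"

definition social_cost :: "game \<Rightarrow> nat set \<Rightarrow> nat set \<Rightarrow> real" where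
  "social_cost G A1 A2 = cost1 G A1 A2 + cost2 G A1 A2"

definition opt_cost :: "game \<Rightarrow> real" where
  "opt_cost G = Min ((\<lambda>(A1, A2). social_cost G A1 A2) ` (acts1 G \<times> acts2 G))"

text \<open>Subgame-perfect equilibrium of the sequential game: a strategy
  \<open>f\<close> of player 2 (response to each action of player 1) and an action
  \<open>a1\<close> of player 1.\<close>

definition is_SPE :: "game \<Rightarrow> (nat set \<Rightarrow> nat set) \<Rightarrow> nat set \<Rightarrow> bool" where
  "is_SPE G f a1 \<longleftrightarrow>
     (\<forall>A1\<in>acts1 G. f A1 \<in> acts2 G \<and> (\<forall>A2\<in>acts2 G. cost2 G A1 (f A1) \<le> cost2 G A1 A2)) \<and>
     a1 \<in> acts1 G \<and>
     (\<forall>A1\<in>acts1 G. cost1 G a1 (f a1) \<le> cost1 G A1 (f A1))"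

definition SPE_outcomes :: "game \<Rightarrow> (nat set \<times> nat set) set" where
  "SPE_outcomes G = {(a1, f a1) | a1 f. is_SPE G f a1}"

definition PoA_instance :: "game \<Rightarrow> ereal" where
  "PoA_instance G = (SUP p \<in> SPE_outcomes G. ereal (social_cost G (fst p) (snd p) / opt_cost G))"

definition PoA_class :: ereal where
  "PoA_class = (SUP G \<in> {G. valid_game G \<and> opt_cost G > 0}. PoA_instance G)"

end

theory Submission
  imports Defs
begin

lemma cost1_sum:
  assumes "finite R" "X \<subseteq> R"
  shows "cost1 G X Y = (\<Sum>r\<in>R. if r \<in> X then alpha G r + beta G r * load G X Y r else 0)"
proof -
  have "cost1 G X Y = sum (\<lambda>r. alpha G r + beta G r * load G X Y r) (R \<inter> X)"
    unfolding cost1_def using assms(2) by (simp add: Int_absorb1)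
  also have "\<dots> = (\<Sum>r\<in>R. if r \<in> X then alpha G r + beta G r * load G X Y r else 0)"
    using assms(1) by (rule sum.inter_restrict)
  finally show ?thesis .
qed

lemma cost2_sum:
  assumes "finite R" "Y \<subseteq> R"
  shows "cost2 G X Y = (\<Sum>r\<in>R. if r \<in> Y then alpha G r + beta G r * load G X Y r else 0)"
proof -
  have "cost2 G X Y = sum (\<lambda>r. alpha G r + beta G r * load G X Y r) (R \<inter> Y)"
    unfolding cost2_def using assms(2) by (simp add: Int_absorb1)
  also have "\<dots> = (\<Sum>r\<in>R. if r \<in> Y then alpha G r + beta G r * load G X Y r else 0)"
    using assms(1) by (rule sum.inter_restrict)
  finally show ?thesis .
qed

lemma key1:
  assumes V: "valid_game G" and le: "wt1 G \<le> wt2 G"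
    and S: "A1 \<in> acts1 G" "O1 \<in> acts1 G" "O2 \<in> acts2 G" "B \<in> acts2 G"
  shows "cost2 G A1 B + cost1 G O1 B \<le> 2 * cost1 G O1 O2 + 2 * cost2 G O1 B"
proof -
  let ?R = "res G"
  have fin: "finite ?R" using V unfolding valid_game_def by blast
  have sub: "A1 \<subseteq> ?R" "O1 \<subseteq> ?R" "O2 \<subseteq> ?R" "B \<subseteq> ?R"
    using V S unfolding valid_game_def by blast+
  have pt: "(if r \<in> B then alpha G r + beta G r * load G A1 B r else 0)
          + (if r \<in> O1 then alpha G r + beta G r * load G O1 B r else 0)
       \<le> 2 * (if r \<in> O1 then alpha G r + beta G r * load G O1 O2 r else 0)
          + 2 * (if r \<in> B then alpha G r + beta G r * load G O1 B r else 0)"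
    if r: "r \<in> ?R" for r
  proof -
    have a: "alpha G r \<ge> 0" and b: "beta G r \<ge> 0" using V r unfolding valid_game_def by auto
    have w: "wt1 G \<ge> 0" "wt2 G \<ge> 0" using V unfolding valid_game_def by auto
    have p1: "beta G r * wt1 G \<ge> 0" "beta G r * wt2 G \<ge> 0" using b w by auto
    have p2: "beta G r * wt1 G \<le> beta G r * wt2 G" using b le by (simp add: mult_left_mono)
    show ?thesis using a b p1 p2 by (auto simp: load_def algebra_simps)
  qed
  have "cost2 G A1 B + cost1 G O1 B = (\<Sum>r\<in>?R. (if r \<in> B then alpha G r + beta G r * load G A1 B r else 0)
          + (if r \<in> O1 then alpha G r + beta G r * load G O1 B r else 0))"
    by (simp add: cost1_sum[OF fin sub(2)] cost2_sum[OF fin sub(4)] sum.distrib)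
  also have "\<dots> \<le> (\<Sum>r\<in>?R. 2 * (if r \<in> O1 then alpha G r + beta G r * load G O1 O2 r else 0)
          + 2 * (if r \<in> B then alpha G r + beta G r * load G O1 B r else 0))"
    by (rule sum_mono) (rule pt)
  also have "\<dots> = 2 * cost1 G O1 O2 + 2 * cost2 G O1 B"
    by (simp add: cost1_sum[OF fin sub(2)] cost2_sum[OF fin sub(4)] sum.distrib sum_distrib_left)
  finally show ?thesis .
qed

lemma key2:
  assumes V: "valid_game G" and le: "wt2 G \<le> wt1 G"
    and S: "A1 \<in> acts1 G" "A2 \<in> acts2 G" "O1 \<in> acts1 G" "O2 \<in> acts2 G" "B \<in> acts2 G"
  shows "cost2 G A1 B + 2 * cost1 G O1 B \<le> 2 * cost1 G O1 O2 + 2 * cost2 G O1 B + cost1 G A1 A2"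
proof -
  let ?R = "res G"
  have fin: "finite ?R" using V unfolding valid_game_def by blast
  have sub: "A1 \<subseteq> ?R" "A2 \<subseteq> ?R" "O1 \<subseteq> ?R" "O2 \<subseteq> ?R" "B \<subseteq> ?R"
    using V S unfolding valid_game_def by blast+
  have pt: "(if r \<in> B then alpha G r + beta G r * load G A1 B r else 0)
          + 2 * (if r \<in> O1 then alpha G r + beta G r * load G O1 B r else 0)
       \<le> 2 * (if r \<in> O1 then alpha G r + beta G r * load G O1 O2 r else 0)
          + 2 * (if r \<in> B then alpha G r + beta G r * load G O1 B r else 0)
          + (if r \<in> A1 then alpha G r + beta G r * load G A1 A2 r else 0)"
    if r: "r \<in> ?R" for r
  proof -
    have a: "alpha G r \<ge> 0" and b: "beta G r \<ge> 0" using V r unfolding valid_game_def by auto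
    have w: "wt1 G \<ge> 0" "wt2 G \<ge> 0" using V unfolding valid_game_def by auto
    have p1: "beta G r * wt1 G \<ge> 0" "beta G r * wt2 G \<ge> 0" using b w by auto
    have p2: "beta G r * wt2 G \<le> beta G r * wt1 G" using b le by (simp add: mult_left_mono)
    show ?thesis using a b p1 p2 by (auto simp: load_def algebra_simps)
  qed
  have "cost2 G A1 B + 2 * cost1 G O1 B = (\<Sum>r\<in>?R. (if r \<in> B then alpha G r + beta G r * load G A1 B r else 0)
          + 2 * (if r \<in> O1 then alpha G r + beta G r * load G O1 B r else 0))"
    by (simp add: cost1_sum[OF fin sub(3)] cost2_sum[OF fin sub(5)] sum.distrib sum_distrib_left)
  also have "\<dots> \<le> (\<Sum>r\<in>?R. 2 * (if r \<in> O1 then alpha G r + beta G r * load G O1 O2 r else 0)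
          + 2 * (if r \<in> B then alpha G r + beta G r * load G O1 B r else 0)
          + (if r \<in> A1 then alpha G r + beta G r * load G A1 A2 r else 0))"
    by (rule sum_mono) (rule pt)
  also have "\<dots> = 2 * cost1 G O1 O2 + 2 * cost2 G O1 B + cost1 G A1 A2"
    by (simp add: cost1_sum[OF fin sub(3)] cost1_sum[OF fin sub(1)] cost2_sum[OF fin sub(5)]
        sum.distrib sum_distrib_left)
  finally show ?thesis .
qed

lemma spe_bound:
  assumes V: "valid_game G" and E: "is_SPE G f a1"
    and O: "O1 \<in> acts1 G" "O2 \<in> acts2 G"
  shows "social_cost G a1 (f a1) \<le> 2 * social_cost G O1 O2"
proof -
  have a1: "a1 \<in> acts1 G" and fa: "f a1 \<in> acts2 G" and fO: "f O1 \<in> acts2 G"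
    using E O unfolding is_SPE_def by auto
  have h2: "cost2 G a1 (f a1) \<le> cost2 G a1 (f O1)" using E a1 fO unfolding is_SPE_def by blast
  have h3: "cost2 G O1 (f O1) \<le> cost2 G O1 O2" using E O unfolding is_SPE_def by blast
  have h5: "cost1 G a1 (f a1) \<le> cost1 G O1 (f O1)" using E O unfolding is_SPE_def by blast
  show ?thesis
  proof (cases "wt1 G \<le> wt2 G")
    case True
    from key1[OF V True a1 O fO] h2 h3 h5 show ?thesis
      unfolding social_cost_def by (simp add: distrib_left)
  next
    case False
    hence "wt2 G \<le> wt1 G" by simp
    from key2[OF V this a1 fa O fO] h2 h3 h5 show ?thesis
      unfolding social_cost_def by (simp add: distrib_left)
  qed
qed

lemma instance_bound:
  assumes V: "valid_game G" and pos: "opt_cost G > 0"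
  shows "PoA_instance G \<le> 2"
  unfolding PoA_instance_def
proof (rule SUP_least)
  fix p assume "p \<in> SPE_outcomes G"
  then obtain a1 f where p: "p = (a1, f a1)" and E: "is_SPE G f a1"
    unfolding SPE_outcomes_def by blast
  let ?S = "(\<lambda>(A1, A2). social_cost G A1 A2) ` (acts1 G \<times> acts2 G)"
  have fin: "finite ?S" using V unfolding valid_game_def by auto
  have ne: "?S \<noteq> {}" using V unfolding valid_game_def by auto
  have "opt_cost G \<in> ?S" unfolding opt_cost_def using Min_in[OF fin ne] .
  then obtain O1 O2 where O: "O1 \<in> acts1 G" "O2 \<in> acts2 G" and oc: "opt_cost G = social_cost G O1 O2"
    by auto
  have "social_cost G a1 (f a1) \<le> 2 * opt_cost G" using spe_bound[OF V E O] oc by simp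
  hence "social_cost G a1 (f a1) / opt_cost G \<le> 2" using pos by (simp add: divide_le_eq)
  thus "ereal (social_cost G (fst p) (snd p) / opt_cost G) \<le> 2" using p by simp
qed

definition G0 :: game where
  "G0 = \<lparr>res = {0,1}, alpha = (\<lambda>r. if r = 0 then 1 else 0), beta = (\<lambda>r. if r = 1 then 1 else 0),
         wt1 = 1, wt2 = 0, acts1 = {{0},{1}}, acts2 = {{1}}\<rparr>"

lemma G0_valid: "valid_game G0"
  unfolding valid_game_def G0_def by auto

lemma G0_opt: "opt_cost G0 = 1"
proof -
  have "(\<lambda>(A1, A2). social_cost G0 A1 A2) ` (acts1 G0 \<times> acts2 G0) = {1, 2}"
    by (simp add: G0_def social_cost_def cost1_def cost2_def load_def)
  thus ?thesis unfolding opt_cost_def by simp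
qed

lemma G0_SPE: "is_SPE G0 (\<lambda>_. {1}) {1}"
  by (simp add: is_SPE_def G0_def cost1_def cost2_def load_def)

lemma G0_poa: "PoA_instance G0 \<ge> 2"
proof -
  have "({1}, {1}) \<in> SPE_outcomes G0" unfolding SPE_outcomes_def using G0_SPE by force
  moreover have "social_cost G0 {1} {1} = 2"
    by (simp add: G0_def social_cost_def cost1_def cost2_def load_def)
  ultimately have "ereal (social_cost G0 (fst ({1::nat}, {1::nat})) (snd ({1::nat}, {1::nat})) / opt_cost G0) \<le> PoA_instance G0"
    unfolding PoA_instance_def by (intro SUP_upper) simp
  thus ?thesis using \<open>social_cost G0 {1} {1} = 2\<close> G0_opt by simp
qed

theorem corollary5:
  shows "PoA_class = 2"
proof (rule antisym)
  show "PoA_class \<le> 2" unfolding PoA_class_def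
    by (rule SUP_least) (blast intro: instance_bound)
  have "G0 \<in> {G. valid_game G \<and> opt_cost G > 0}" using G0_valid G0_opt by simp
  hence "PoA_instance G0 \<le> PoA_class" unfolding PoA_class_def by (rule SUP_upper)
  thus "2 \<le> PoA_class" using G0_poa by simp
qed

end
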